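(* Let $\Sigma$ and $Q$ be $p\times p$ symmetric positive definite matrices and $A$ a $p\times p$ matrix. Then $A\Sigma=\Sigma A^\top$ and $QA=A^\top Q$ both hold if and only if there exists a nonsingular matrix $B$ such that $Q=B^\top B$, $\Sigma=B^{-1}D(B^\top)^{-1}$ and $A=B^{-1}A^*B$, where $D$ and $A^*$ are diagonal matrices whose diagonal elements are, respectively, the eigenvalues of $\Sigma Q$ and of $A$. *)

theory Defs
  imports "HOL-Analysis.Analysis"
begin

definition sym_mat :: "real^'n^'n \<Rightarrow> bool" where
  "sym_mat S \<longleftrightarrow> transpose S = S"

definition pos_def_mat :: "real^'n^'n \<Rightarrow> bool" where
  "pos_def_mat S \<longleftrightarrow> sym_mat S \<and> (\<forall>x. x \<noteq> 0 \<longrightarrow> x \<bullet> (S *v x) > 0)"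

definition diag_mat :: "real^'n^'n \<Rightarrow> bool" where
  "diag_mat D \<longleftrightarrow> (\<forall>i j. i \<noteq> j \<longrightarrow> D $ i $ j = 0)"

text \<open>The diagonal entries of D are the eigenvalues of M, counted with (algebraic)
  multiplicity: the characteristic polynomial of M splits as the product of (x - D_ii).\<close>
definition diag_of_eigenvalues :: "real^'n^'n \<Rightarrow> real^'n^'n \<Rightarrow> bool" where
  "diag_of_eigenvalues D M \<longleftrightarrow> diag_mat D \<and>
     (\<forall>x::real. det (x *\<^sub>R mat 1 - M) = (\<Prod>i\<in>UNIV. x - D $ i $ i))"

end

theory Submission
  imports Defs
begin

lemma sym_inner:
  fixes S :: "real^'n^'n"
  assumes "transpose S = S"
  shows "x \<bullet> (S *v y) = (S *v x) \<bullet> y"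
  by (metis assms dot_lmul_matrix transpose_matrix_vector)

lemma sym_eigvec:
  fixes S :: "real^'n^'n"
  assumes symS: "transpose S = S" and sV: "subspace V" and nz: "V \<noteq> {0}"
    and inv: "\<forall>x\<in>V. S *v x \<in> V"
  shows "\<exists>x\<in>V. x \<noteq> 0 \<and> (\<exists>l. S *v x = l *\<^sub>R x)"
proof -
  let ?K = "V \<inter> sphere 0 1"
  let ?f = "\<lambda>x::real^'n. x \<bullet> (S *v x)"
  have cK: "compact ?K"
    by (intro closed_Int_compact closed_subspace sV compact_sphere)
  obtain v where v: "v \<in> V" "v \<noteq> 0" using nz sV subspace_0 by blast
  have "v /\<^sub>R norm v \<in> ?K" using v sV by (auto simp: subspace_scale)
  hence neK: "?K \<noteq> {}" by blast
  have cf: "continuous_on ?K ?f"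
    by (intro continuous_intros linear_continuous_on matrix_vector_mul_bounded_linear)
  obtain x where xK: "x \<in> ?K" and xmax: "\<And>y. y \<in> ?K \<Longrightarrow> ?f y \<le> ?f x"
    using continuous_attains_sup[OF cK neK cf] by blast
  have xV: "x \<in> V" and nx: "norm x = 1" using xK by auto
  hence xx: "x \<bullet> x = 1" by (simp add: norm_eq_1)
  define l where "l = ?f x"
  define w where "w = S *v x - l *\<^sub>R x"
  have wV: "w \<in> V" unfolding w_def using xV inv sV by (simp add: subspace_diff subspace_scale)
  have xw: "x \<bullet> w = 0" unfolding w_def l_def using xx by (simp add: inner_diff_right)
  have "w = 0"
  proof (rule ccontr)
    assume "w \<noteq> 0"
    define n where "n = w \<bullet> w"
    have npos: "n > 0" using \<open>w \<noteq> 0\<close> by (simp add: n_def)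
    define m where "m = w \<bullet> (S *v w)"
    have wSx: "w \<bullet> (S *v x) = n"
    proof -
      have "S *v x = w + l *\<^sub>R x" unfolding w_def by simp
      hence "w \<bullet> (S *v x) = w \<bullet> w + l * (w \<bullet> x)" by (simp add: inner_add_right)
      thus ?thesis using xw by (simp add: n_def inner_commute)
    qed
    have xSw: "x \<bullet> (S *v w) = n" using wSx sym_inner[OF symS] by (metis inner_commute)
    define e where "e = n / (\<bar>l\<bar> * n + \<bar>m\<bar> + 1)"
    have den: "\<bar>l\<bar> * n + \<bar>m\<bar> + 1 > 0" using npos by (simp add: add_nonneg_pos)
    have epos: "e > 0" unfolding e_def using npos den by simp
    define z where "z = x + e *\<^sub>R w"
    have zz: "z \<bullet> z = 1 + e^2 * n"
      unfolding z_def using xx xw by (simp add: inner_add_left inner_add_right inner_commute n_def power2_eq_square)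
    have fz: "?f z = l + 2 * e * n + e^2 * m"
      unfolding z_def using wSx xSw
      by (simp add: inner_add_left inner_add_right matrix_vector_right_distrib matrix_vector_mult_scaleR
            l_def m_def power2_eq_square algebra_simps)
    have zpos: "z \<bullet> z > 0" using zz npos by (simp add: add_pos_nonneg)
    hence zne: "z \<noteq> 0" by auto
    have zV: "z \<in> V" unfolding z_def using xV wV sV by (simp add: subspace_add subspace_scale)
    have "z /\<^sub>R norm z \<in> ?K" using zV zne sV by (auto simp: subspace_scale)
    hence "?f (z /\<^sub>R norm z) \<le> l" using xmax l_def by blast
    moreover have "?f (z /\<^sub>R norm z) = ?f z / (z \<bullet> z)"
      by (simp add: matrix_vector_mult_scaleR power2_norm_eq_inner[symmetric] power2_eq_square divide_simps)
    ultimately have "?f z \<le> l * (z \<bullet> z)" using zpos by (simp add: divide_le_eq)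
    hence "2 * e * n \<le> e * (e * (l * n - m))" unfolding fz zz by (simp add: algebra_simps power2_eq_square)
    hence le: "2 * n \<le> e * (l * n - m)" using epos by simp
    have "e * (l * n - m) \<le> e * (\<bar>l\<bar> * n + \<bar>m\<bar>)"
    proof (rule mult_left_mono)
      have "l * n \<le> \<bar>l\<bar> * n" using npos by (intro mult_right_mono) auto
      thus "l * n - m \<le> \<bar>l\<bar> * n + \<bar>m\<bar>" by linarith
    qed (use epos in simp)
    also have "\<dots> < e * (\<bar>l\<bar> * n + \<bar>m\<bar> + 1)" using epos by simp
    also have "\<dots> = n" unfolding e_def using den by simp
    finally show False using le npos by simp
  qed
  hence "S *v x = l *\<^sub>R x" unfolding w_def by simp
  moreover have "x \<noteq> 0" using nx by auto
  ultimately show ?thesis using xV by blast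
qed

lemma common_eigvec:
  fixes S T :: "real^'n^'n"
  assumes symS: "transpose S = S" and symT: "transpose T = T" and comm: "S ** T = T ** S"
    and sV: "subspace V" and nz: "V \<noteq> {0}"
    and invS: "\<forall>x\<in>V. S *v x \<in> V" and invT: "\<forall>x\<in>V. T *v x \<in> V"
  shows "\<exists>v\<in>V. norm v = 1 \<and> (\<exists>a. S *v v = a *\<^sub>R v) \<and> (\<exists>b. T *v v = b *\<^sub>R v)"
proof -
  obtain x l where xV: "x \<in> V" and x0: "x \<noteq> 0" and Sx: "S *v x = l *\<^sub>R x"
    using sym_eigvec[OF symS sV nz invS] by blast
  define E where "E = {y \<in> V. S *v y = l *\<^sub>R y}"
  have sE: "subspace E"
    unfolding subspace_def E_def using sV
    by (auto simp: subspace_0 subspace_add subspace_scale matrix_vector_right_distrib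
          matrix_vector_mult_scaleR scaleR_add_right)
  have xE: "x \<in> E" using xV Sx by (simp add: E_def)
  hence nzE: "E \<noteq> {0}" using x0 by blast
  have invE: "\<forall>y\<in>E. T *v y \<in> E"
  proof
    fix y assume "y \<in> E"
    hence yV: "y \<in> V" and Sy: "S *v y = l *\<^sub>R y" by (auto simp: E_def)
    have "S *v (T *v y) = T *v (S *v y)" by (simp add: matrix_vector_mul_assoc comm)
    also have "\<dots> = l *\<^sub>R (T *v y)" by (simp add: Sy matrix_vector_mult_scaleR)
    finally show "T *v y \<in> E" using invT yV by (simp add: E_def)
  qed
  obtain y m where yE: "y \<in> E" and y0: "y \<noteq> 0" and Ty: "T *v y = m *\<^sub>R y"
    using sym_eigvec[OF symT sE nzE invE] by blast
  have yV: "y \<in> V" and Sy: "S *v y = l *\<^sub>R y" using yE by (auto simp: E_def)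
  define v where "v = y /\<^sub>R norm y"
  have "v \<in> V" unfolding v_def using yV sV by (simp add: subspace_scale)
  moreover have "norm v = 1" unfolding v_def using y0 by simp
  moreover have "S *v v = l *\<^sub>R v" unfolding v_def by (simp add: Sy matrix_vector_mult_scaleR)
  moreover have "T *v v = m *\<^sub>R v" unfolding v_def by (simp add: Ty matrix_vector_mult_scaleR)
  ultimately show ?thesis by blast
qed

lemma common_basis:
  fixes S T :: "real^'n^'n"
  assumes symS: "transpose S = S" and symT: "transpose T = T" and comm: "S ** T = T ** S"
  shows "subspace V \<Longrightarrow> (\<forall>x\<in>V. S *v x \<in> V) \<Longrightarrow> (\<forall>x\<in>V. T *v x \<in> V) \<Longrightarrow>
    \<exists>B. B \<subseteq> V \<and> span B = V \<and> pairwise orthogonal B \<and>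
      (\<forall>b\<in>B. norm b = 1 \<and> (\<exists>a. S *v b = a *\<^sub>R b) \<and> (\<exists>a. T *v b = a *\<^sub>R b))"
proof (induction "dim V" arbitrary: V rule: less_induct)
  case less
  show ?case
  proof (cases "V = {0}")
    case True
    thus ?thesis by (intro exI[of _ "{}"]) auto
  next
    case False
    obtain v where vV: "v \<in> V" and nv: "norm v = 1" and Sv: "\<exists>a. S *v v = a *\<^sub>R v"
        and Tv: "\<exists>b. T *v v = b *\<^sub>R v"
      using common_eigvec[OF symS symT comm less.prems(1) False less.prems(2,3)] by blast
    have vv: "v \<bullet> v = 1" using nv by (simp add: norm_eq_1)
    define V' where "V' = V \<inter> {x. v \<bullet> x = 0}"
    have sV': "subspace V'" unfolding V'_def
      using less.prems(1) subspace_hyperplane[of v] by (rule subspace_inter)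
    have orth_inv: "v \<bullet> (M *v x) = 0" if h1: "transpose M = M" and h2: "\<exists>a. M *v v = a *\<^sub>R v" and h3: "v \<bullet> x = 0" for M x
    proof -
      obtain a where "M *v v = a *\<^sub>R v" using h2 by blast
      thus ?thesis using sym_inner[OF h1, of v x] h3 by simp
    qed
    have iS: "\<forall>x\<in>V'. S *v x \<in> V'" using less.prems(2) orth_inv[OF symS Sv] by (auto simp: V'_def)
    have iT: "\<forall>x\<in>V'. T *v x \<in> V'" using less.prems(3) orth_inv[OF symT Tv] by (auto simp: V'_def)
    have "v \<notin> V'" using vv by (simp add: V'_def)
    moreover have "V' \<subseteq> V" by (auto simp: V'_def)
    ultimately have "V' \<subset> V" using vV by blast
    hence "dim V' < dim V"
      using dim_psubset[of V' V] span_eq_iff sV' less.prems(1) by metis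
    then obtain B' where B': "B' \<subseteq> V'" "span B' = V'" "pairwise orthogonal B'"
        "\<forall>b\<in>B'. norm b = 1 \<and> (\<exists>a. S *v b = a *\<^sub>R b) \<and> (\<exists>a. T *v b = a *\<^sub>R b)"
      using less.hyps[OF _ sV' iS iT] by blast
    define B where "B = insert v B'"
    have "B \<subseteq> V" using B'(1) vV by (auto simp: B_def V'_def)
    moreover have "span B = V"
    proof
      show "span B \<subseteq> V" using \<open>B \<subseteq> V\<close> less.prems(1) by (simp add: span_minimal)
      show "V \<subseteq> span B"
      proof
        fix x assume xV: "x \<in> V"
        let ?y = "x - (v \<bullet> x) *\<^sub>R v"
        have "?y \<in> V'" using xV vV less.prems(1) vv
          by (simp add: V'_def subspace_diff subspace_scale inner_diff_right)
        hence "?y \<in> span B" using B'(2) span_mono[of B' B] by (auto simp: B_def)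
        moreover have "(v \<bullet> x) *\<^sub>R v \<in> span B" by (simp add: B_def span_base span_scale)
        ultimately have "?y + (v \<bullet> x) *\<^sub>R v \<in> span B" by (rule span_add)
        thus "x \<in> span B" by simp
      qed
    qed
    moreover have "pairwise orthogonal B"
      unfolding B_def using B'(1,3)
      by (auto simp: pairwise_insert V'_def orthogonal_def inner_commute)
    moreover have "\<forall>b\<in>B. norm b = 1 \<and> (\<exists>a. S *v b = a *\<^sub>R b) \<and> (\<exists>a. T *v b = a *\<^sub>R b)"
      using B'(4) nv Sv Tv by (auto simp: B_def)
    ultimately show ?thesis by blast
  qed
qed

lemma conj_entry:
  fixes U M :: "real^'n^'n"
  shows "(U ** M ** transpose U) $ i $ j = (U $ i) \<bullet> (M *v (U $ j))"
proof -
  have "(U ** M ** transpose U) $ i $ j = (\<Sum>k\<in>UNIV. (\<Sum>l\<in>UNIV. U$i$l * M$l$k) * U$j$k)"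
    by (simp add: matrix_matrix_mult_def transpose_def)
  also have "\<dots> = (\<Sum>k\<in>UNIV. \<Sum>l\<in>UNIV. U$i$l * (M$l$k * U$j$k))"
    by (simp add: sum_distrib_right mult.assoc)
  also have "\<dots> = (\<Sum>l\<in>UNIV. \<Sum>k\<in>UNIV. U$i$l * (M$l$k * U$j$k))"
    by (rule sum.swap)
  also have "\<dots> = (U $ i) \<bullet> (M *v (U $ j))"
    by (simp add: inner_vec_def matrix_vector_mult_def sum_distrib_left)
  finally show ?thesis .
qed

lemma gram_entry:
  fixes U :: "real^'n^'n"
  shows "(U ** transpose U) $ i $ j = (U $ i) \<bullet> (U $ j)"
  by (simp add: matrix_matrix_mult_def inner_vec_def transpose_def)

lemma gram_id:
  fixes u :: "'n \<Rightarrow> real^'n"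
  assumes orth: "\<And>i j. u i \<bullet> u j = (if i = j then 1 else 0)"
  shows "(\<chi> i. u i) ** transpose (\<chi> i. u i) = (mat 1::real^'n^'n)"
proof -
  have "((\<chi> i. u i) ** transpose (\<chi> i. u i)) $ i $ j = mat 1 $ i $ j" for i j
    using gram_entry[of "\<chi> i. u i" i j] orth[of i j] by (simp add: mat_def)
  thus ?thesis by (simp add: vec_eq_iff)
qed

lemma simul_diag:
  fixes S T :: "real^'n^'n"
  assumes symS: "transpose S = S" and symT: "transpose T = T" and comm: "S ** T = T ** S"
  shows "\<exists>U::real^'n^'n. U ** transpose U = mat 1 \<and> diag_mat (U ** S ** transpose U) \<and> diag_mat (U ** T ** transpose U)"
proof -
  obtain B where B: "span B = UNIV" "pairwise orthogonal B"
      "\<forall>b\<in>B. norm b = 1 \<and> (\<exists>a. S *v b = a *\<^sub>R b) \<and> (\<exists>a. T *v b = a *\<^sub>R b)"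
    using common_basis[OF symS symT comm, of UNIV] by auto
  have "0 \<notin> B" using B(3) by fastforce
  hence indB: "independent B" using B(2) pairwise_orthogonal_independent by blast
  hence finB: "finite B" by (rule finiteI_independent)
  have "card B = dim (UNIV :: (real^'n) set)" using indB B(1) dim_eq_card_independent dim_span by metis
  also have "\<dots> = CARD('n)" by simp
  finally have "card (UNIV::'n set) = card B" by simp
  then obtain u where bij: "bij_betw u (UNIV::'n set) B"
    using finite_same_card_bij[OF finite finB] by blast
  have uB: "u i \<in> B" for i using bij bij_betwE by blast
  have uinj: "u i = u j \<Longrightarrow> i = j" for i j using bij by (auto simp: bij_betw_def inj_on_def)
  define U :: "real^'n^'n" where "U = (\<chi> i. u i)"
  have Ui: "U $ i = u i" for i by (simp add: U_def)
  have orth: "u i \<bullet> u j = (if i = j then 1 else 0)" for i j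
  proof (cases "i = j")
    case True thus ?thesis using B(3) uB[of i] by (simp add: norm_eq_1)
  next
    case False
    hence "u i \<noteq> u j" using uinj by blast
    thus ?thesis using B(2) uB[of i] uB[of j] False by (auto simp: pairwise_def orthogonal_def)
  qed
  have UU: "U ** transpose U = mat 1" unfolding U_def by (rule gram_id) (rule orth)
  have dg: "diag_mat (U ** M ** transpose U)" if hM: "\<forall>b\<in>B. \<exists>a. M *v b = a *\<^sub>R b" for M
    unfolding diag_mat_def
  proof (intro allI impI)
    fix i j :: 'n assume ij: "i \<noteq> j"
    obtain a where "M *v u j = a *\<^sub>R u j" using hM uB[of j] by blast
    thus "(U ** M ** transpose U) $ i $ j = 0"
      using ij by (simp add: conj_entry Ui orth)
  qed
  have hS: "\<forall>b\<in>B. \<exists>a. S *v b = a *\<^sub>R b" and hT: "\<forall>b\<in>B. \<exists>a. T *v b = a *\<^sub>R b"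
    using B(3) by auto
  show ?thesis using UU dg[OF hS] dg[OF hT] by (intro exI[of _ U]) simp
qed


lemma cancel_l: "(X::real^'n^'n) ** Y = mat 1 \<Longrightarrow> X ** (Y ** Z) = Z"
  by (simp add: matrix_mul_assoc)

lemma inv_unique:
  fixes P P' :: "real^'n^'n"
  assumes "P ** P' = mat 1"
  shows "matrix_inv P = P'"
proof -
  have PP: "P' ** P = mat 1" using assms matrix_left_right_inverse by blast
  have "\<exists>X. P ** X = mat 1 \<and> X ** P = mat 1" using assms PP by blast
  hence X: "P ** matrix_inv P = mat 1 \<and> matrix_inv P ** P = mat 1"
    unfolding matrix_inv_def by (rule someI_ex)
  have "matrix_inv P = matrix_inv P ** (P ** P')" using assms by simp
  also have "\<dots> = P'" using X by (simp add: matrix_mul_assoc)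
  finally show ?thesis .
qed

lemma inv_props:
  fixes B :: "real^'n^'n"
  assumes "invertible B"
  shows "B ** matrix_inv B = mat 1" "matrix_inv B ** B = mat 1"
proof -
  obtain B' where "B ** B' = mat 1" using assms invertible_right_inverse by blast
  thus "B ** matrix_inv B = mat 1" "matrix_inv B ** B = mat 1"
    using inv_unique matrix_left_right_inverse by metis+
qed

lemma matrix_diff_ldistrib: "(A::real^'n^'n) ** (B - C) = A ** B - A ** C"
  by (vector matrix_matrix_mult_def sum_subtractf[symmetric] algebra_simps)

lemma matrix_diff_rdistrib: "((B::real^'n^'n) - C) ** A = B ** A - C ** A"
  by (vector matrix_matrix_mult_def sum_subtractf[symmetric] algebra_simps)

lemma sim_det:
  fixes P P' M :: "real^'n^'n"
  assumes "P' ** P = mat 1"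
  shows "det (x *\<^sub>R mat 1 - P' ** M ** P) = det (x *\<^sub>R mat 1 - M)"
proof -
  have "x *\<^sub>R mat 1 - P' ** M ** P = P' ** (x *\<^sub>R mat 1 - M) ** P"
    using assms by (simp add: matrix_diff_ldistrib matrix_diff_rdistrib matrix_scalar_ac scalar_matrix_assoc[symmetric])
  hence "det (x *\<^sub>R mat 1 - P' ** M ** P) = det P' * det (x *\<^sub>R mat 1 - M) * det P"
    by (simp add: det_mul)
  also have "\<dots> = det (P' ** P) * det (x *\<^sub>R mat 1 - M)" by (simp add: det_mul)
  also have "\<dots> = det (x *\<^sub>R mat 1 - M)" using assms by simp
  finally show ?thesis .
qed

lemma diag_eig:
  fixes P P' D :: "real^'n^'n"
  assumes "diag_mat D" "P' ** P = mat 1"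
  shows "diag_of_eigenvalues D (P' ** D ** P)"
  unfolding diag_of_eigenvalues_def
proof (intro conjI allI)
  fix x :: real
  have "det (x *\<^sub>R mat 1 - D) = (\<Prod>i\<in>UNIV. (x *\<^sub>R mat 1 - D) $ i $ i)"
    by (rule det_diagonal) (use assms(1) in \<open>simp add: diag_mat_def mat_def\<close>)
  thus "det (x *\<^sub>R mat 1 - P' ** D ** P) = (\<Prod>i\<in>UNIV. x - D $ i $ i)"
    using sim_det[OF assms(2)] by (simp add: mat_def)
qed (rule assms(1))

lemma diag_comm:
  fixes D E :: "real^'n^'n"
  assumes "diag_mat D" "diag_mat E"
  shows "D ** E = E ** D"
proof -
  have "(D ** E) $ i $ j = (E ** D) $ i $ j" for i j
  proof -
    have "(D ** E) $ i $ j = (\<Sum>k\<in>UNIV. D $ i $ k * E $ k $ j)"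
      by (simp add: matrix_matrix_mult_def)
    also have "\<dots> = (\<Sum>k\<in>UNIV. if k = i then D $ i $ i * E $ i $ j else 0)"
      by (rule sum.cong) (use assms(1) in \<open>auto simp: diag_mat_def\<close>)
    also have "\<dots> = D $ i $ i * E $ i $ j" by simp
    finally have 1: "(D ** E) $ i $ j = D $ i $ i * E $ i $ j" .
    have "(E ** D) $ i $ j = (\<Sum>k\<in>UNIV. E $ i $ k * D $ k $ j)"
      by (simp add: matrix_matrix_mult_def)
    also have "\<dots> = (\<Sum>k\<in>UNIV. if k = j then E $ i $ j * D $ j $ j else 0)"
      by (rule sum.cong) (use assms(1) in \<open>auto simp: diag_mat_def\<close>)
    also have "\<dots> = E $ i $ j * D $ j $ j" by simp
    finally have 2: "(E ** D) $ i $ j = E $ i $ j * D $ j $ j" .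
    show ?thesis
    proof (cases "i = j")
      case True thus ?thesis using 1 2 by simp
    next
      case False thus ?thesis using 1 2 assms(2) by (simp add: diag_mat_def)
    qed
  qed
  thus ?thesis by (simp add: vec_eq_iff)
qed

lemma diag_transpose:
  fixes D :: "real^'n^'n"
  assumes "diag_mat D" shows "transpose D = D"
proof -
  have "transpose D $ i $ j = D $ i $ j" for i j
    using assms by (cases "i = j") (auto simp: transpose_def diag_mat_def)
  thus ?thesis by (simp add: vec_eq_iff)
qed

definition dg :: "('n \<Rightarrow> real) \<Rightarrow> real^'n^'n" where
  "dg f = (\<chi> i j. if i = j then f i else 0)"

lemma dg_mult: "dg f ** dg g = dg (\<lambda>i. f i * g i)"
proof -
  have "(dg f ** dg g) $ i $ j = dg (\<lambda>i. f i * g i) $ i $ j" for i j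
  proof -
    have "(dg f ** dg g) $ i $ j = (\<Sum>k\<in>UNIV. (if i = k then f i else 0) * (if k = j then g k else 0))"
      by (simp add: matrix_matrix_mult_def dg_def)
    also have "\<dots> = (\<Sum>k\<in>UNIV. if k = i then (if i = j then f i * g i else 0) else 0)"
      by (rule sum.cong) auto
    also have "\<dots> = dg (\<lambda>i. f i * g i) $ i $ j" by (simp add: dg_def)
    finally show ?thesis .
  qed
  thus ?thesis by (simp add: vec_eq_iff)
qed

lemma dg_one: "dg (\<lambda>_. 1) = mat 1"
  by (simp add: dg_def mat_def)

lemma dg_diag: "diag_mat D \<Longrightarrow> D = dg (\<lambda>i. D $ i $ i)"
proof -
  assume d: "diag_mat D"
  have "D $ i $ j = dg (\<lambda>i. D $ i $ i) $ i $ j" for i j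
    using d by (cases "i = j") (auto simp: dg_def diag_mat_def)
  thus ?thesis unfolding vec_eq_iff by blast
qed

lemma dg_transpose: "transpose (dg f) = dg f"
  by (rule diag_transpose) (simp add: diag_mat_def dg_def)

lemma pd_factor:
  fixes Q :: "real^'n^'n"
  assumes pd: "pos_def_mat Q"
  shows "\<exists>C Ci::real^'n^'n. C ** Ci = mat 1 \<and> Q = transpose C ** C"
proof -
  have sQ: "transpose Q = Q" and posQ: "\<And>x. x \<noteq> 0 \<Longrightarrow> x \<bullet> (Q *v x) > 0"
    using pd by (auto simp: pos_def_mat_def sym_mat_def)
  obtain U0 :: "real^'n^'n" where U0: "U0 ** transpose U0 = mat 1" and dL: "diag_mat (U0 ** Q ** transpose U0)"
    using simul_diag[OF sQ sQ refl] by blast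
  have U0': "transpose U0 ** U0 = mat 1" using U0 matrix_left_right_inverse by blast
  define lam where "lam i = (U0 ** Q ** transpose U0) $ i $ i" for i
  have Ldg: "U0 ** Q ** transpose U0 = dg lam" unfolding lam_def by (rule dg_diag[OF dL])
  have lpos: "lam i > 0" for i
  proof -
    have "U0 $ i \<bullet> U0 $ i = 1" using gram_entry[of U0 i i] U0 by (simp add: mat_def)
    hence "U0 $ i \<noteq> 0" by auto
    thus ?thesis using posQ conj_entry[of U0 Q i i] by (simp add: lam_def)
  qed
  define R where "R = dg (\<lambda>i. sqrt (lam i))"
  define Ri where "Ri = dg (\<lambda>i. 1 / sqrt (lam i))"
  have e1: "(\<lambda>i. sqrt (lam i) * (1 / sqrt (lam i))) = (\<lambda>_. 1)"
    using lpos by (auto simp: fun_eq_iff) (metis less_irrefl)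
  have e2: "(\<lambda>i. sqrt (lam i) * sqrt (lam i)) = lam"
    using lpos by (auto simp: fun_eq_iff less_imp_le)
  have RRi: "R ** Ri = mat 1" unfolding R_def Ri_def dg_mult e1 dg_one ..
  have RR: "R ** R = dg lam" unfolding R_def dg_mult e2 ..
  have RT: "transpose R = R" unfolding R_def by (rule dg_transpose)
  define C where "C = R ** U0"
  define Ci where "Ci = transpose U0 ** Ri"
  have "C ** Ci = mat 1"
  proof -
    have "R ** U0 ** (transpose U0 ** Ri) = R ** (U0 ** (transpose U0 ** Ri))" by (simp add: matrix_mul_assoc)
    also have "\<dots> = mat 1" using cancel_l[OF U0, of Ri] RRi by simp
    finally show ?thesis unfolding C_def Ci_def .
  qed
  moreover have "Q = transpose C ** C"
  proof -
    have "transpose C ** C = transpose U0 ** (R ** R) ** U0"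
      unfolding C_def by (simp add: matrix_transpose_mul RT matrix_mul_assoc)
    also have "\<dots> = transpose U0 ** (U0 ** Q ** transpose U0) ** U0" by (simp add: RR Ldg)
    also have "\<dots> = (transpose U0 ** U0) ** Q ** (transpose U0 ** U0)" by (simp add: matrix_mul_assoc)
    also have "\<dots> = Q" by (simp add: U0')
    finally show ?thesis by simp
  qed
  ultimately show ?thesis by blast
qed

lemma transpose_inv:
  fixes X Y :: "real^'n^'n"
  assumes "X ** Y = mat 1"
  shows "transpose Y ** transpose X = mat 1"
  using assms by (metis matrix_transpose_mul transpose_mat)

lemma cancel_pack:
  fixes X Y :: "real^'n^'n"
  assumes "X ** Y = mat 1"
  shows "X ** Y = mat 1" "Y ** X = mat 1" "X ** (Y ** Z) = Z" "Y ** (X ** Z) = Z"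
    "transpose Y ** transpose X = mat 1" "transpose X ** transpose Y = mat 1"
    "transpose Y ** (transpose X ** Z) = Z" "transpose X ** (transpose Y ** Z) = Z"
proof -
  have YX: "Y ** X = mat 1" using assms matrix_left_right_inverse by blast
  show "X ** Y = mat 1" "Y ** X = mat 1" by (fact assms, fact YX)
  show "X ** (Y ** Z) = Z" by (rule cancel_l[OF assms])
  show "Y ** (X ** Z) = Z" by (rule cancel_l[OF YX])
  show t1: "transpose Y ** transpose X = mat 1" by (rule transpose_inv[OF assms])
  show t2: "transpose X ** transpose Y = mat 1" by (rule transpose_inv[OF YX])
  show "transpose Y ** (transpose X ** Z) = Z" by (rule cancel_l[OF t1])
  show "transpose X ** (transpose Y ** Z) = Z" by (rule cancel_l[OF t2])
qed

lemmas ra = matrix_mul_assoc[symmetric]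

theorem mainTheorem10:
  fixes Sigma Q A :: "real^'p^'p"
  assumes "pos_def_mat Sigma" and "pos_def_mat Q"
  shows "(A ** Sigma = Sigma ** transpose A \<and> Q ** A = transpose A ** Q) \<longleftrightarrow>
    (\<exists>B D Astar :: real^'p^'p. invertible B \<and>
       Q = transpose B ** B \<and>
       Sigma = matrix_inv B ** D ** matrix_inv (transpose B) \<and>
       A = matrix_inv B ** Astar ** B \<and>
       diag_of_eigenvalues D (Sigma ** Q) \<and>
       diag_of_eigenvalues Astar A)"
proof
  have sSig: "transpose Sigma = Sigma" using assms(1) by (simp add: pos_def_mat_def sym_mat_def)
  assume "A ** Sigma = Sigma ** transpose A \<and> Q ** A = transpose A ** Q"
  hence h1: "A ** Sigma = Sigma ** transpose A" and h2: "Q ** A = transpose A ** Q" by auto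
  obtain C Ci :: "real^'p^'p" where CCi: "C ** Ci = mat 1" and QC: "Q = transpose C ** C"
    using pd_factor[OF assms(2)] by blast
  note cC = cancel_pack[OF CCi]
  define S' where "S' = C ** Sigma ** transpose C"
  define A' where "A' = C ** A ** Ci"
  have symS': "transpose S' = S'" unfolding S'_def
    by (simp add: matrix_transpose_mul sSig matrix_mul_assoc)
  have h2': "transpose C ** (C ** A) = transpose A ** (transpose C ** C)"
    using h2 unfolding QC by (simp add: matrix_mul_assoc)
  have symA': "transpose A' = A'"
  proof -
    have "A' = transpose Ci ** (transpose C ** (C ** A)) ** Ci"
      unfolding A'_def by (simp add: ra cC)
    also have "\<dots> = transpose Ci ** (transpose A ** (transpose C ** C)) ** Ci" by (simp only: h2')
    also have "\<dots> = transpose A'" unfolding A'_def by (simp add: ra cC matrix_transpose_mul)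
    finally show ?thesis by simp
  qed
  have comm: "S' ** A' = A' ** S'"
  proof -
    have "A' ** S' = C ** (A ** Sigma) ** transpose C" unfolding A'_def S'_def by (simp add: ra cC)
    moreover have "S' ** A' = C ** (Sigma ** transpose A) ** transpose C"
    proof -
      have "S' ** A' = S' ** transpose A'" by (simp add: symA')
      also have "\<dots> = C ** (Sigma ** transpose A) ** transpose C"
        unfolding A'_def S'_def by (simp add: ra cC matrix_transpose_mul)
      finally show ?thesis .
    qed
    ultimately show ?thesis using h1 by simp
  qed
  obtain U :: "real^'p^'p" where UU: "U ** transpose U = mat 1"
    and dD: "diag_mat (U ** S' ** transpose U)" and dA: "diag_mat (U ** A' ** transpose U)"
    using simul_diag[OF symS' symA' comm] by blast
  note cU = cancel_pack[OF UU]
  define D where "D = U ** S' ** transpose U"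
  define As where "As = U ** A' ** transpose U"
  define B where "B = U ** C"
  define Bi where "Bi = Ci ** transpose U"
  have BBi: "B ** Bi = mat 1" unfolding B_def Bi_def by (simp add: ra cC cU)
  note cB = cancel_pack[OF BBi]
  have invB: "invertible B" using BBi invertible_right_inverse by blast
  have iB: "matrix_inv B = Bi" by (rule inv_unique[OF BBi])
  have iBT: "matrix_inv (transpose B) = transpose Bi" by (rule inv_unique) (rule cB(6))
  have eQ: "Q = transpose B ** B" unfolding QC B_def by (simp add: ra cU matrix_transpose_mul)
  have eS: "Sigma = Bi ** D ** transpose Bi"
    unfolding D_def Bi_def S'_def by (simp add: ra cU cC matrix_transpose_mul)
  have eA: "A = Bi ** As ** B"
    unfolding As_def Bi_def B_def A'_def by (simp add: ra cU cC matrix_transpose_mul)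
  have "Sigma ** Q = Bi ** D ** B"
    unfolding eS eQ by (simp add: ra cB)
  hence e1: "diag_of_eigenvalues D (Sigma ** Q)" using diag_eig[OF dD[folded D_def] cB(2)] by simp
  have e2: "diag_of_eigenvalues As A" using diag_eig[OF dA[folded As_def] cB(2)] eA by simp
  show "\<exists>B D Astar :: real^'p^'p. invertible B \<and>
       Q = transpose B ** B \<and>
       Sigma = matrix_inv B ** D ** matrix_inv (transpose B) \<and>
       A = matrix_inv B ** Astar ** B \<and>
       diag_of_eigenvalues D (Sigma ** Q) \<and>
       diag_of_eigenvalues Astar A"
    using invB eQ eS eA e1 e2 iB iBT by (intro exI[of _ B] exI[of _ D] exI[of _ As]) simp
next
  assume "\<exists>B D Astar :: real^'p^'p. invertible B \<and>
       Q = transpose B ** B \<and>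
       Sigma = matrix_inv B ** D ** matrix_inv (transpose B) \<and>
       A = matrix_inv B ** Astar ** B \<and>
       diag_of_eigenvalues D (Sigma ** Q) \<and>
       diag_of_eigenvalues Astar A"
  then obtain B D As :: "real^'p^'p" where invB: "invertible B" and eQ: "Q = transpose B ** B"
    and eS: "Sigma = matrix_inv B ** D ** matrix_inv (transpose B)"
    and eA: "A = matrix_inv B ** As ** B" and dD: "diag_of_eigenvalues D (Sigma ** Q)"
    and dA: "diag_of_eigenvalues As A" by blast
  define Bi where "Bi = matrix_inv B"
  have BBi: "B ** Bi = mat 1" unfolding Bi_def by (rule inv_props(1)[OF invB])
  note cB = cancel_pack[OF BBi]
  have iBT: "matrix_inv (transpose B) = transpose Bi" by (rule inv_unique) (rule cB(6))
  have DD: "diag_mat D" and DA: "diag_mat As" using dD dA by (auto simp: diag_of_eigenvalues_def)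
  have tD: "transpose D = D" and tA: "transpose As = As" using DD DA by (auto intro: diag_transpose)
  have cm: "As ** (D ** Z) = D ** (As ** Z)" for Z
    using diag_comm[OF DA DD] by (simp add: matrix_mul_assoc)
  have "A ** Sigma = Sigma ** transpose A"
    unfolding eA eS iBT Bi_def[symmetric] by (simp add: ra cB matrix_transpose_mul tD tA cm)
  moreover have "Q ** A = transpose A ** Q"
    unfolding eA eQ Bi_def[symmetric] by (simp add: ra cB matrix_transpose_mul tA)
  ultimately show "A ** Sigma = Sigma ** transpose A \<and> Q ** A = transpose A ** Q" by blast
qed

end
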